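(* Let $A$ be a finite alphabet and $P\in I(A^* )$ defined by $P(u,v)=\binom{v}{u}$. For all $u,v\in A^*$ and every integer $d$ (for $d<0$, $P^d$ means $(P^{-1})^{-d}$, and $P^0=\delta$), $$P^d(u,v)=d^{|v|-|u|}P(u,v),$$ with the convention $0^0=1$. Equivalently, for $d\ne0$, letting $D_d\in I(A^* )$ be $D_d(u,v)=d^{|u|}\delta(u,v)$, one has $P^d=D_d^{-1}PD_d=D_{1/d}PD_d$; in particular $P^{-1}=D_{-1}PD_{-1}$.
   Context: $A^*$ is the set of finite words over $A$; $|w|$ is the length. For words $u=a_1\cdots a_k$, $v=b_1\cdots b_n$, $\binom{v}{u}$ is the number of order-preserving injections $\varphi:[k]\to[n]$ with $a_i=b_{\varphi(i)}$ for all $i$. $A^*$ is ordered by $u\le v$ iff $\binom{v}{u}>0$. $I(A^* )$ is the incidence algebra over $\mathbb{Q}$: functions on pairs $(u,v)$ with $u\le v$, convolution $(FG)(u,v)=\sum_{u\le w\le v}F(u,w)G(w,v)$, identity $\delta(u,v)=[u=v]$ (Iverson bracket). $P$ is invertible since $P(u,u)=1$. *)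

theory Defs
  imports Complex_Main
begin

text \<open>Words over an alphabet are lists over a finite type 'a.
  An embedding of u into v is encoded by the strictly increasing list of
  positions phi(1) < ... < phi(k) in v.\<close>

definition embeddings :: "'a list \<Rightarrow> 'a list \<Rightarrow> nat list set" where
  "embeddings v u = {is. length is = length u \<and> sorted_wrt (<) is \<and>
      (\<forall>i<length u. is ! i < length v \<and> u ! i = v ! (is ! i))}"

definition binom :: "'a list \<Rightarrow> 'a list \<Rightarrow> nat" where
  "binom v u = card (embeddings v u)"

definition wle :: "'a list \<Rightarrow> 'a list \<Rightarrow> bool" where
  "wle u v \<longleftrightarrow> binom v u > 0"

type_synonym 'a inc = "'a list \<Rightarrow> 'a list \<Rightarrow> rat"

definition inc_alg :: "'a inc set" where
  "inc_alg = {F. \<forall>u v. \<not> wle u v \<longrightarrow> F u v = 0}"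

definition conv :: "'a inc \<Rightarrow> 'a inc \<Rightarrow> 'a inc" where
  "conv F G u v = (\<Sum>w\<in>{w. wle u w \<and> wle w v}. F u w * G w v)"

definition delta :: "'a inc" where
  "delta u v = (if u = v then 1 else 0)"

fun conv_pow :: "'a inc \<Rightarrow> nat \<Rightarrow> 'a inc" where
  "conv_pow F 0 = delta"
| "conv_pow F (Suc n) = conv F (conv_pow F n)"

definition inc_inv :: "'a inc \<Rightarrow> 'a inc" where
  "inc_inv F = (THE G. G \<in> inc_alg \<and> conv F G = delta \<and> conv G F = delta)"

definition int_pow :: "'a inc \<Rightarrow> int \<Rightarrow> 'a inc" where
  "int_pow F d = (if 0 \<le> d then conv_pow F (nat d) else conv_pow (inc_inv F) (nat (- d)))"

definition Pmat :: "'a inc" where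
  "Pmat u v = of_nat (binom v u)"

definition Dmat :: "rat \<Rightarrow> 'a inc" where
  "Dmat c u v = (if u = v then c ^ length u else 0)"

end

theory Submission
  imports Defs
begin


lemma emb_fin: "finite (embeddings v u)"
proof -
  have "embeddings v u \<subseteq> {xs. set xs \<subseteq> {..<length v} \<and> length xs = length u}"
    by (auto simp: embeddings_def in_set_conv_nth)
  thus ?thesis by (rule finite_subset) (rule finite_lists_length_eq, simp)
qed

lemma emb_Nil: "embeddings v [] = {[]}"
  by (auto simp: embeddings_def)

lemma emb_Nil_Cons: "embeddings [] (b#u) = {}"
  by (auto simp: embeddings_def)

lemma emb_map_Suc: "map Suc ks \<in> embeddings (a#v) u \<longleftrightarrow> ks \<in> embeddings v u"
  by (auto simp: embeddings_def sorted_wrt_map)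

lemma emb_0_map_Suc: "0 # map Suc ks \<in> embeddings (a#v) (b#u) \<longleftrightarrow> a = b \<and> ks \<in> embeddings v u"
  by (auto simp: embeddings_def sorted_wrt_map All_less_Suc2)

lemma pos_map_Suc: "\<forall>x\<in>set xs. 0 < x \<Longrightarrow> xs = map Suc (map (\<lambda>x. x - 1) xs)"
  by (induct xs) auto

lemma emb_Cons_shape:
  assumes "xs \<in> embeddings (a#v) (b#u)"
  shows "(\<exists>ks. xs = map Suc ks) \<or> (\<exists>ks. xs = 0 # map Suc ks)"
proof -
  from assms obtain j js where xsj: "xs = j # js" and s: "\<forall>y\<in>set js. j < y"
    by (cases xs) (auto simp: embeddings_def)
  show ?thesis
  proof (cases "j = 0")
    case True
    with s have "js = map Suc (map (\<lambda>x. x - 1) js)" by (intro pos_map_Suc) auto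
    with True xsj show ?thesis by blast
  next
    case False
    with s have "xs = map Suc (map (\<lambda>x. x - 1) xs)" using xsj by (intro pos_map_Suc) auto
    thus ?thesis by blast
  qed
qed

lemma emb_Cons_Cons: "embeddings (a#v) (b#u) =
   map Suc ` embeddings v (b#u) \<union> (if a = b then (\<lambda>ks. 0 # map Suc ks) ` embeddings v u else {})"
  (is "?L = ?R")
proof
  show "?L \<subseteq> ?R"
  proof
    fix xs assume h: "xs \<in> ?L"
    from emb_Cons_shape[OF h] show "xs \<in> ?R"
    proof
      assume "\<exists>ks. xs = map Suc ks"
      then obtain ks where "xs = map Suc ks" by blast
      with h show ?thesis by (auto simp: emb_map_Suc)
    next
      assume "\<exists>ks. xs = 0 # map Suc ks"
      then obtain ks where "xs = 0 # map Suc ks" by blast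
      with h show ?thesis by (auto simp: emb_0_map_Suc)
    qed
  qed
next
  show "?R \<subseteq> ?L" by (auto simp: emb_map_Suc emb_0_map_Suc)
qed

lemma binom_Nil [simp]: "binom v [] = 1"
  by (simp add: binom_def emb_Nil)

lemma binom_Nil_Cons [simp]: "binom [] (b#u) = 0"
  by (simp add: binom_def emb_Nil_Cons)

lemma binom_Cons_Cons: "binom (a#v) (b#u) = binom v (b#u) + (if a = b then binom v u else 0)"
proof -
  have i1: "inj_on (map Suc) A" for A :: "nat list set" by (rule inj_on_subset[OF inj_mapI]) (auto simp: inj_def)
  have i2: "inj_on (\<lambda>ks. 0 # map Suc ks) A" for A :: "nat list set"
    using inj_mapI[of Suc] by (auto simp: inj_on_def inj_def)
  have d: "map Suc ` A \<inter> (\<lambda>ks. 0 # map Suc ks) ` B = {}" for A B :: "nat list set"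
    by (auto simp: Cons_eq_map_conv)
  show ?thesis
    unfolding binom_def emb_Cons_Cons
    using d[of "embeddings v (b#u)" "embeddings v u"]
    by (simp add: card_Un_disjoint emb_fin card_image i1 i2)
qed

lemma binom_Cons: "binom (a#v) u = binom v u + (case u of [] \<Rightarrow> 0 | b#u' \<Rightarrow> if a = b then binom v u' else 0)"
  by (cases u) (simp_all add: binom_Cons_Cons)

lemma binom_len: "binom v u > 0 \<Longrightarrow> length u \<le> length v"
proof (induct v arbitrary: u)
  case Nil thus ?case by (cases u) auto
next
  case (Cons a v)
  show ?case
  proof (cases u)
    case (Cons b u')
    have "0 < binom v (b#u') \<or> 0 < binom v u'"
      using Cons.prems Cons by (auto simp: binom_Cons_Cons split: if_splits)
    thus ?thesis using Cons.hyps[of "b#u'"] Cons.hyps[of u'] Cons by auto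
  qed simp
qed

lemma binom_same_len: "length u = length v \<Longrightarrow> binom v u = (if u = v then 1 else 0)"
proof (induct v arbitrary: u)
  case Nil thus ?case by auto
next
  case (Cons a v)
  then obtain b u' where u: "u = b # u'" "length u' = length v" by (cases u) auto
  have "\<not> 0 < binom v (b#u')" using binom_len[of v "b#u'"] u by auto
  hence "binom v (b#u') = 0" by simp
  with u Cons show ?case by (simp add: binom_Cons_Cons)
qed



definition Q :: "rat \<Rightarrow> 'a inc" where
  "Q x u v = x ^ (length v - length u) * of_nat (binom v u)"

definition LL :: "nat \<Rightarrow> ('a::finite) list set" where
  "LL n = {w. length w \<le> n}"

lemma LL_fin: "finite (LL n)"
proof -
  have "LL n = {xs. set xs \<subseteq> (UNIV::'a set) \<and> length xs \<le> n}" by (auto simp: LL_def)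
  thus ?thesis using finite_lists_length_le[of "UNIV::'a set" n] by simp
qed

lemma Q_Nil_right: "Q y w [] = (if w = [] then 1 else 0)"
  by (cases w) (auto simp: Q_def)

lemma Q_Cons_right: "Q y w (a#v) = y * Q y w v + (case w of [] \<Rightarrow> 0 | c#w' \<Rightarrow> if a = c then Q y w' v else 0)"
proof (cases w)
  case Nil thus ?thesis by (simp add: Q_def binom_Cons)
next
  case (Cons c w')
  have 1: "y ^ (Suc (length v) - length w) * of_nat (binom v w) = y * Q y w v"
  proof (cases "binom v w = 0")
    case False
    hence "length w \<le> length v" using binom_len by auto
    hence "Suc (length v) - length w = Suc (length v - length w)" by simp
    thus ?thesis by (simp add: Q_def)
  qed (simp add: Q_def)
  show ?thesis using 1 Cons by (simp add: Q_def binom_Cons_Cons distrib_left)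
qed

lemma reindex_Cons:
  "(\<Sum>w\<in>LL (Suc m). (case w of [] \<Rightarrow> 0 | c#w' \<Rightarrow> if a = c then g w' else (0::rat))) = (\<Sum>w'\<in>LL m. g w')"
proof -
  let ?f = "\<lambda>w. (case w of [] \<Rightarrow> 0 | c#w' \<Rightarrow> if a = c then g w' else (0::rat))"
  have "(\<Sum>w\<in>LL (Suc m). ?f w) = (\<Sum>w\<in>Cons a ` LL m. ?f w)"
  proof (rule sum.mono_neutral_right[OF LL_fin])
    show "Cons a ` LL m \<subseteq> LL (Suc m)" by (auto simp: LL_def)
    show "\<forall>i\<in>LL (Suc m) - Cons a ` LL m. ?f i = 0"
      by (auto simp: LL_def split: list.splits)
  qed
  also have "\<dots> = (\<Sum>w'\<in>LL m. g w')" by (subst sum.reindex) auto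
  finally show ?thesis .
qed

lemma main_sum: "length v \<le> n \<Longrightarrow> (\<Sum>w\<in>LL n. Q x u w * Q y w v) = Q (x+y) u (v::'a::finite list)"
proof (induct v arbitrary: u n)
  case Nil
  have "(\<Sum>w\<in>LL n. Q x u w * Q y w []) = (\<Sum>w\<in>LL n. if w = ([]::'a list) then Q x u [] else 0)"
    by (rule sum.cong) (auto simp: Q_Nil_right)
  also have "\<dots> = Q x u []" by (simp add: LL_fin, simp add: LL_def)
  finally show ?case by (simp add: Q_def)
next
  case (Cons a v)
  then obtain m where n: "n = Suc m" and m: "length v \<le> m" by (cases n) auto
  let ?R = "\<lambda>w. (case w of [] \<Rightarrow> 0 | c#w' \<Rightarrow> if a = c then Q y w' v else 0)"
  have "(\<Sum>w\<in>LL n. Q x u w * Q y w (a#v)) =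
        y * (\<Sum>w\<in>LL n. Q x u w * Q y w v) + (\<Sum>w\<in>LL n. Q x u w * ?R w)"
    by (simp add: Q_Cons_right distrib_left sum.distrib sum_distrib_left mult.assoc mult.left_commute)
  also have "(\<Sum>w\<in>LL n. Q x u w * Q y w v) = Q (x+y) u v"
    using Cons.hyps[of n u] Cons.prems by simp
  also have "(\<Sum>w\<in>LL n. Q x u w * ?R w) =
     (\<Sum>w\<in>LL n. (case w of [] \<Rightarrow> 0 | c#w' \<Rightarrow> if a = c then Q x u (a#w') * Q y w' v else 0))"
    by (rule sum.cong) (auto split: list.splits)
  also have "\<dots> = (\<Sum>w'\<in>LL m. Q x u (a#w') * Q y w' v)"
    unfolding n by (rule reindex_Cons)
  also have "\<dots> = x * (\<Sum>w'\<in>LL m. Q x u w' * Q y w' v) +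
      (case u of [] \<Rightarrow> 0 | b#u' \<Rightarrow> if a = b then (\<Sum>w'\<in>LL m. Q x u' w' * Q y w' v) else 0)"
    by (simp add: Q_Cons_right distrib_right sum.distrib sum_distrib_left mult.assoc split: list.splits)
  also have "(\<Sum>w'\<in>LL m. Q x u w' * Q y w' v) = Q (x+y) u v" using Cons.hyps[of m u] m by simp
  also have "(case u of [] \<Rightarrow> 0 | b#u' \<Rightarrow> if a = b then (\<Sum>w'\<in>LL m. Q x u' w' * Q y w' v) else 0)
     = (case u of [] \<Rightarrow> 0 | b#u' \<Rightarrow> if a = b then Q (x+y) u' v else 0)"
    using Cons.hyps m by (simp split: list.splits)
  finally show ?case by (simp add: Q_Cons_right[of "x+y"] distrib_right)
qed



lemma wle_len: "wle u v \<Longrightarrow> length u \<le> length v"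
  by (simp add: wle_def binom_len)

lemma wle_refl: "wle u u"
  by (simp add: wle_def binom_same_len)

lemma Q_zero: "\<not> wle u v \<Longrightarrow> Q x u v = 0"
  by (simp add: wle_def Q_def)

lemma conv_Q: "conv (Q x) (Q y) = (Q (x+y) :: 'a::finite inc)"
proof (intro ext)
  fix u v :: "'a list"
  have "conv (Q x) (Q y) u v = (\<Sum>w\<in>LL (length v). Q x u w * Q y w v)"
    unfolding conv_def
  proof (rule sum.mono_neutral_left[OF LL_fin])
    show "{w. wle u w \<and> wle w v} \<subseteq> LL (length v)" by (auto simp: LL_def wle_len)
    show "\<forall>i\<in>LL (length v) - {w. wle u w \<and> wle w v}. Q x u i * Q y i v = 0"
      by (auto simp: Q_def wle_def)
  qed
  also have "\<dots> = Q (x+y) u v" by (rule main_sum) simp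
  finally show "conv (Q x) (Q y) u v = Q (x+y) u v" .
qed

lemma wle_trans: "wle u w \<Longrightarrow> wle w v \<Longrightarrow> wle u (v::'a::finite list)"
proof -
  assume a: "wle u w" "wle w v"
  have "0 < (\<Sum>z\<in>LL (length v). Q 1 u z * Q 1 z v)"
  proof (rule sum_pos2[OF LL_fin])
    show "w \<in> LL (length v)" using a by (auto simp: LL_def wle_len)
    show "0 < Q 1 u w * Q 1 w v" using a by (simp add: Q_def wle_def)
    show "0 \<le> Q 1 u i * Q 1 i v" for i by (simp add: Q_def)
  qed
  also have "\<dots> = Q 2 u v" using main_sum[of v "length v" 1 u 1] by simp
  finally show ?thesis by (auto simp: Q_def wle_def zero_less_mult_iff)
qed

lemma conv_LL: "length v \<le> n \<Longrightarrow>
   conv F G u v = (\<Sum>w\<in>LL n. if wle u w \<and> wle w v then F u w * G w v else 0)"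
proof -
  assume n: "length v \<le> n"
  have "{w \<in> LL n. wle u w \<and> wle w v} = {w. wle u w \<and> wle w (v::'a::finite list)}"
    using n by (auto simp: LL_def dest: wle_len)
  thus ?thesis unfolding conv_def by (simp add: sum.inter_filter[OF LL_fin, symmetric])
qed

lemma conv_assoc: "conv (conv F G) H = conv F (conv G H :: 'a::finite inc)"
proof (intro ext)
  fix u v :: "'a list"
  let ?L = "LL (length v) :: 'a list set"
  have "conv (conv F G) H u v = (\<Sum>w\<in>?L. if wle u w \<and> wle w v then conv F G u w * H w v else 0)"
    by (rule conv_LL) simp
  also have "\<dots> = (\<Sum>w\<in>?L. \<Sum>z\<in>?L. if wle u w \<and> wle w v \<and> wle u z \<and> wle z w then F u z * G z w * H w v else 0)"
  proof (rule sum.cong[OF refl])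
    fix w assume "w \<in> ?L"
    show "(if wle u w \<and> wle w v then conv F G u w * H w v else 0) =
      (\<Sum>z\<in>?L. if wle u w \<and> wle w v \<and> wle u z \<and> wle z w then F u z * G z w * H w v else 0)"
    proof (cases "wle u w \<and> wle w v")
      case True
      hence "conv F G u w = (\<Sum>z\<in>?L. if wle u z \<and> wle z w then F u z * G z w else 0)"
        by (intro conv_LL) (auto dest: wle_len)
      thus ?thesis using True by (auto simp: sum_distrib_right intro!: sum.cong)
    qed (auto intro!: sum.neutral)
  qed
  also have "\<dots> = (\<Sum>z\<in>?L. \<Sum>w\<in>?L. if wle u w \<and> wle w v \<and> wle u z \<and> wle z w then F u z * G z w * H w v else 0)"
    by (rule sum.swap)
  also have "\<dots> = (\<Sum>z\<in>?L. \<Sum>w\<in>?L. if wle u z \<and> wle z v \<and> wle z w \<and> wle w v then F u z * G z w * H w v else 0)"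
    by (intro sum.cong refl) (auto dest: wle_trans)
  also have "\<dots> = (\<Sum>z\<in>?L. if wle u z \<and> wle z v then F u z * conv G H z v else 0)"
  proof (rule sum.cong[OF refl])
    fix z assume "z \<in> ?L"
    show "(\<Sum>w\<in>?L. if wle u z \<and> wle z v \<and> wle z w \<and> wle w v then F u z * G z w * H w v else 0) =
      (if wle u z \<and> wle z v then F u z * conv G H z v else 0)"
    proof (cases "wle u z \<and> wle z v")
      case True
      hence "conv G H z v = (\<Sum>w\<in>?L. if wle z w \<and> wle w v then G z w * H w v else 0)"
        by (intro conv_LL) auto
      thus ?thesis using True by (auto simp: sum_distrib_left mult.assoc intro!: sum.cong)
    qed (auto intro!: sum.neutral)
  qed
  also have "\<dots> = conv F (conv G H) u v" by (rule conv_LL[symmetric]) simp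
  finally show "conv (conv F G) H u v = conv F (conv G H) u v" .
qed

lemma S_fin: "finite {w. wle u w \<and> wle w (v::'a::finite list)}"
  by (rule finite_subset[OF _ LL_fin[of "length v"]]) (auto simp: LL_def dest: wle_len)

lemma conv_delta_right: "G \<in> inc_alg \<Longrightarrow> conv G delta = (G :: 'a::finite inc)"
proof (intro ext)
  fix u v :: "'a list" assume G: "G \<in> inc_alg"
  have "conv G delta u v = (\<Sum>w\<in>{w. wle u w \<and> wle w v}. if v = w then G u v else 0)"
    unfolding conv_def by (rule sum.cong) (auto simp: delta_def)
  also have "\<dots> = G u v" using S_fin[of u v] G by (auto simp: wle_refl inc_alg_def)
  finally show "conv G delta u v = G u v" .
qed

lemma conv_delta_left: "G \<in> inc_alg \<Longrightarrow> conv delta G = (G :: 'a::finite inc)"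
proof (intro ext)
  fix u v :: "'a list" assume G: "G \<in> inc_alg"
  have "conv delta G u v = (\<Sum>w\<in>{w. wle u w \<and> wle w v}. if u = w then G u v else 0)"
    unfolding conv_def by (rule sum.cong) (auto simp: delta_def)
  also have "\<dots> = G u v" using S_fin[of u v] G by (auto simp: wle_refl inc_alg_def)
  finally show "conv delta G u v = G u v" .
qed

lemma inc_inv_eq:
  assumes H: "H \<in> inc_alg" and 1: "conv F H = delta" and 2: "conv H F = (delta :: 'a::finite inc)"
  shows "inc_inv F = H"
  unfolding inc_inv_def
proof (rule the_equality)
  show "H \<in> inc_alg \<and> conv F H = delta \<and> conv H F = delta" using assms by simp
  fix G assume G: "G \<in> inc_alg \<and> conv F G = delta \<and> conv G F = delta"
  have "G = conv G delta" using G conv_delta_right by metis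
  also have "\<dots> = conv (conv G F) H" by (simp add: conv_assoc 1)
  also have "\<dots> = H" using G conv_delta_left[OF H] by simp
  finally show "G = H" .
qed

lemma Q_inc: "Q x \<in> inc_alg"
  by (auto simp: inc_alg_def Q_zero)

lemma Dmat_inc: "Dmat c \<in> inc_alg"
  by (auto simp: inc_alg_def Dmat_def wle_refl)

lemma Q0: "Q 0 = (delta :: 'a::finite inc)"
proof (intro ext)
  fix u v :: "'a list"
  show "Q 0 u v = delta u v"
  proof (cases "u = v")
    case True thus ?thesis by (simp add: Q_def delta_def binom_same_len)
  next
    case False
    show ?thesis
    proof (cases "binom v u = 0")
      case False
      hence "length u \<le> length v" using binom_len by auto
      moreover have "length u \<noteq> length v" using binom_same_len[of u v] \<open>u \<noteq> v\<close> False by auto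
      ultimately show ?thesis using \<open>u \<noteq> v\<close> by (simp add: Q_def delta_def)
    qed (simp add: Q_def delta_def \<open>u \<noteq> v\<close>)
  qed
qed

lemma Pmat_Q: "Pmat = Q 1"
  by (intro ext) (simp add: Pmat_def Q_def)

lemma conv_pow_Q: "conv_pow (Q c) m = (Q (c * of_nat m) :: 'a::finite inc)"
  by (induct m) (simp_all add: Q0 conv_Q algebra_simps)

lemma inv_P: "inc_inv (Pmat :: 'a::finite inc) = Q (-1)"
  by (rule inc_inv_eq) (simp_all add: Q_inc Pmat_Q conv_Q Q0)

lemma conv_Dmat_left: "conv (Dmat e) (F :: 'a::finite inc) u v = (if wle u v then e ^ length u * F u v else (0::rat))"
proof -
  have "conv (Dmat e) F u v = (\<Sum>w\<in>{w. wle u w \<and> wle w v}. if u = w then e ^ length u * F u v else 0)"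
    unfolding conv_def by (rule sum.cong) (auto simp: Dmat_def)
  also have "\<dots> = (if wle u v then e ^ length u * F u v else 0)"
    using S_fin[of u v] by (auto simp: wle_refl)
  finally show ?thesis .
qed

lemma conv_Dmat_right: "conv (F :: 'a::finite inc) (Dmat e) u v = (if wle u v then F u v * e ^ length v else (0::rat))"
proof -
  have "conv F (Dmat e) u v = (\<Sum>w\<in>{w. wle u w \<and> wle w v}. if v = w then F u v * e ^ length v else 0)"
    unfolding conv_def by (rule sum.cong) (auto simp: Dmat_def)
  also have "\<dots> = (if wle u v then F u v * e ^ length v else 0)"
    using S_fin[of u v] by (auto simp: wle_refl)
  finally show ?thesis .
qed

lemma conv_Dmat_Dmat: "conv (Dmat a) (Dmat b) = (Dmat (a*b) :: 'a::finite inc)"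
  by (intro ext) (auto simp: conv_Dmat_left Dmat_def power_mult_distrib wle_refl)

lemma delta_Dmat: "delta = Dmat 1"
  by (intro ext) (simp add: delta_def Dmat_def)

lemma inv_Dmat: "c \<noteq> 0 \<Longrightarrow> inc_inv (Dmat c) = (Dmat (1/c) :: 'a::finite inc)"
  by (rule inc_inv_eq) (simp_all add: Dmat_inc conv_Dmat_Dmat delta_Dmat)

lemma conj_Q: "c \<noteq> 0 \<Longrightarrow> conv (Dmat (1/c)) (conv Pmat (Dmat c)) = (Q c :: 'a::finite inc)"
proof (intro ext)
  fix u v :: "'a list" assume c: "c \<noteq> 0"
  show "conv (Dmat (1/c)) (conv Pmat (Dmat c)) u v = Q c u v"
  proof (cases "wle u v")
    case True
    hence l: "length u \<le> length v" by (rule wle_len)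
    have "c ^ length v = c ^ (length v - length u) * c ^ length u"
      using l by (simp add: power_add[symmetric])
    hence "(1/c) ^ length u * c ^ length v = c ^ (length v - length u)"
      using c by (simp add: power_one_over field_simps)
    thus ?thesis using True
      by (simp add: conv_Dmat_left conv_Dmat_right Pmat_def Q_def algebra_simps)
  qed (simp add: conv_Dmat_left Q_zero)
qed


theorem mainTheorem5:
  fixes d :: int
  shows "(\<forall>(u::'a::finite list) v.
            int_pow Pmat d u v = (of_int d) ^ (length v - length u) * Pmat u v)
       \<and> (d \<noteq> 0 \<longrightarrow>
            inc_inv (Dmat (of_int d)) = (Dmat (1 / of_int d) :: 'a inc)
          \<and> int_pow (Pmat :: 'a inc) d = conv (Dmat (1 / of_int d)) (conv Pmat (Dmat (of_int d)))
          \<and> inc_inv (Pmat :: 'a inc) = conv (Dmat (-1)) (conv Pmat (Dmat (-1))))"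
proof -
  have ip: "int_pow (Pmat :: 'a inc) d = Q (of_int d)"
  proof (cases "0 \<le> d")
    case True thus ?thesis by (simp add: int_pow_def Pmat_Q conv_pow_Q)
  next
    case False thus ?thesis by (simp add: int_pow_def inv_P conv_pow_Q)
  qed
  have 1: "\<forall>(u::'a list) v. int_pow Pmat d u v = (of_int d) ^ (length v - length u) * Pmat u v"
    by (simp add: ip Q_def Pmat_def)
  have m1: "Dmat (-1) = (Dmat (1 / -1) :: 'a inc)" by simp
  have 2: "inc_inv (Pmat :: 'a inc) = conv (Dmat (-1)) (conv Pmat (Dmat (-1)))"
    using conj_Q[of "-1", where 'a='a] by (simp add: inv_P)
  have 3: "d \<noteq> 0 \<longrightarrow> inc_inv (Dmat (of_int d)) = (Dmat (1 / of_int d) :: 'a inc)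
          \<and> int_pow (Pmat :: 'a inc) d = conv (Dmat (1 / of_int d)) (conv Pmat (Dmat (of_int d)))"
  proof
    assume "d \<noteq> 0"
    hence c: "(of_int d :: rat) \<noteq> 0" by simp
    show "inc_inv (Dmat (of_int d)) = (Dmat (1 / of_int d) :: 'a inc)
          \<and> int_pow (Pmat :: 'a inc) d = conv (Dmat (1 / of_int d)) (conv Pmat (Dmat (of_int d)))"
      using inv_Dmat[OF c] conj_Q[OF c] ip by (metis (no_types))
  qed
  show ?thesis using 1 2 3 by blast
qed

end
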